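(* Let $S$ be the tree with five vertices consisting of a root vertex of valence $1$, above it a vertex of valence $3$, and above each of the three incoming edges of the latter a vertex of valence $1$ (each carrying one leaf). Let $R$ be the tree with five vertices consisting of a root vertex of valence $2$, and above each of its two incoming edges a linear chain of two vertices of valence $1$ (each chain ending in one leaf). Then for every $n\in\mathbb N$, $$sh(S,L_n)=sh(R,L_n)=\sum_{k=0}^n\binom{k+2}{2}^2,$$ although $S$ and $R$ are not isomorphic.
   Context: A tree is a finite connected graph without cycles whose external edges are open. One external edge is the root; the others are leaves. Each vertex has one outgoing edge (towards the root) and a strictly positive number (valence) of incoming edges. No planar structure. $L_n$ is the linear tree with $n$ vertices, all of valence $1$. Shuffle: for trees $S,T$ with root edges $r_S,r_T$, a shuffle is a tree $A$ with edges labelled by pairs $(s,t)\in E(S)\times E(T)$ such that: (1) the root of $A$ is labelled $(r_S,r_T)$; (2) the labelling restricts to a bijection from leaves of $A$ onto $\mathrm{Leaves}(S)\times\mathrm{Leaves}(T)$; (3) if an edge labelled $(s,t)$ is not a leaf, the incoming edges of the vertex of $A$ above it are labelled either exactly $(s_1,t),\dots,(s_m,t)$ for $s_1,\dots,s_m$ the edges immediately above $s$ in $S$, or exactly $(s,t_1),\dots,(s,t_n)$ for $t_1,\dots,t_n$ the edges immediately above $t$ in $T$. Shuffles are taken up to isomorphism of labelled trees; $sh(S,T)$ is their number. *)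

theory Defs
  imports Main
begin

text \<open>A rooted tree is represented by its set of edges, its root edge, and a
  parent function: for a non-root edge e, par e is the outgoing edge of the
  vertex into which e is incoming. Every vertex is identified with its outgoing
  edge; the incoming edges of the vertex above e are the children of e. No planar structure.\<close>

type_synonym 'e rtree = "'e set \<times> 'e \<times> ('e \<Rightarrow> 'e)"

definition edges :: "'e rtree \<Rightarrow> 'e set" where "edges T = fst T"
definition root :: "'e rtree \<Rightarrow> 'e" where "root T = fst (snd T)"
definition par :: "'e rtree \<Rightarrow> 'e \<Rightarrow> 'e" where "par T = snd (snd T)"

definition children :: "'e rtree \<Rightarrow> 'e \<Rightarrow> 'e set" where
  "children T e = {c \<in> edges T. c \<noteq> root T \<and> par T c = e}"

definition leaves :: "'e rtree \<Rightarrow> 'e set" where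
  "leaves T = {e \<in> edges T. children T e = {}}"

definition is_tree :: "'e rtree \<Rightarrow> bool" where
  "is_tree T \<longleftrightarrow> finite (edges T) \<and> root T \<in> edges T
     \<and> (\<forall>e \<in> edges T - {root T}. par T e \<in> edges T)
     \<and> (\<forall>e \<in> edges T. \<exists>k. (par T ^^ k) e = root T)"

definition tree_iso :: "'a rtree \<Rightarrow> 'b rtree \<Rightarrow> bool" where
  "tree_iso A B \<longleftrightarrow> (\<exists>f. bij_betw f (edges A) (edges B) \<and> f (root A) = root B
     \<and> (\<forall>e \<in> edges A - {root A}. f (par A e) = par B (f e)))"

text \<open>Shuffles of S and T: trees A (edges taken in nat, which loses nothing up to
  isomorphism) with a labelling of edges by pairs of edges of S and T.\<close>
definition is_shuffle :: "'a rtree \<Rightarrow> 'b rtree \<Rightarrow> nat rtree \<Rightarrow> (nat \<Rightarrow> 'a \<times> 'b) \<Rightarrow> bool" where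
  "is_shuffle S T A lab \<longleftrightarrow> is_tree A
     \<and> (\<forall>e \<in> edges A. lab e \<in> edges S \<times> edges T)
     \<and> lab (root A) = (root S, root T)
     \<and> bij_betw lab (leaves A) (leaves S \<times> leaves T)
     \<and> (\<forall>e \<in> edges A - leaves A.
          bij_betw lab (children A e) (children S (fst (lab e)) \<times> {snd (lab e)})
        \<or> bij_betw lab (children A e) ({fst (lab e)} \<times> children T (snd (lab e))))"

definition shuffles :: "'a rtree \<Rightarrow> 'b rtree \<Rightarrow> (nat rtree \<times> (nat \<Rightarrow> 'a \<times> 'b)) set" where
  "shuffles S T = {(A, lab). is_shuffle S T A lab}"

definition lab_iso :: "nat rtree \<times> (nat \<Rightarrow> 'c) \<Rightarrow> nat rtree \<times> (nat \<Rightarrow> 'c) \<Rightarrow> bool" where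
  "lab_iso X Y \<longleftrightarrow> (\<exists>f. bij_betw f (edges (fst X)) (edges (fst Y))
     \<and> f (root (fst X)) = root (fst Y)
     \<and> (\<forall>e \<in> edges (fst X) - {root (fst X)}. f (par (fst X) e) = par (fst Y) (f e))
     \<and> (\<forall>e \<in> edges (fst X). snd Y (f e) = snd X e))"

definition sh :: "'a rtree \<Rightarrow> 'b rtree \<Rightarrow> nat" where
  "sh S T = card (shuffles S T // {(X, Y). X \<in> shuffles S T \<and> Y \<in> shuffles S T \<and> lab_iso X Y})"

text \<open>Linear tree with n vertices of valence 1: edges 0..n, root 0.\<close>
definition L :: "nat \<Rightarrow> nat rtree" where
  "L n = ({0..n}, 0, \<lambda>e. e - 1)"

text \<open>S: root edge 0; vertex above 0 has incoming edge 1; vertex above 1 has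
  incoming 2,3,4; vertices above 2,3,4 have leaves 5,6,7.\<close>
definition S_tree :: "nat rtree" where
  "S_tree = ({0..7}, 0, \<lambda>e. if e = 1 then 0 else if e \<in> {2,3,4} then 1
        else if e = 5 then 2 else if e = 6 then 3 else if e = 7 then 4 else 0)"

text \<open>R: root edge 0; vertex above 0 has incoming 1,2; chains 1-3-5 and 2-4-6.\<close>
definition R_tree :: "nat rtree" where
  "R_tree = ({0..6}, 0, \<lambda>e. if e \<in> {1,2} then 0 else if e = 3 then 1
        else if e = 4 then 2 else if e = 5 then 3 else if e = 6 then 4 else 0)"

end

theory Submission
  imports Defs "HOL-Library.Nat_Bijection"
begin


lemma two_choose: "2 * (Suc k choose 2) = Suc k * k"
proof (induction k)
  case 0 then show ?case by (simp add: choose_two)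
next
  case (Suc k)
  have "Suc (Suc k) choose 2 = Suc k + (Suc k choose 2)"
    by (simp add: numeral_2_eq_2)
  then show ?case using Suc by (simp add: algebra_simps)
qed

lemma sum_cubes: "(\<Sum>j=0..m. (Suc j)^3) = ((m+2) choose 2)^2"
proof (induction m)
  case 0 then show ?case by (simp add: choose_two)
next
  case (Suc m)
  have e: "Suc (Suc (Suc m)) choose 2 = Suc (Suc m) + (Suc (Suc m) choose 2)"
    by (simp add: numeral_2_eq_2)
  have t: "2 * (Suc (Suc m) choose 2) = Suc (Suc m) * Suc m" using two_choose[of "Suc m"] .
  define C where "C = Suc (Suc m) choose 2"
  have t': "2 * C = Suc (Suc m) * Suc m" using t C_def by simp
  have "(C + Suc (Suc m))^2 = C^2 + (Suc (Suc m))^3"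
  proof -
    have "(C + Suc (Suc m))^2 = C^2 + 2*C*Suc (Suc m) + (Suc (Suc m))^2" by (simp add: power2_eq_square algebra_simps)
    also have "2*C*Suc (Suc m) = Suc (Suc m) * Suc m * Suc (Suc m)" using t' by simp
    finally show ?thesis by (simp add: power2_eq_square power3_eq_cube algebra_simps)
  qed
  then show ?case using Suc e by (simp add: C_def add.commute)
qed

lemma sum_lin: "(\<Sum>j=0..m. Suc j) = ((m+2) choose 2)"
proof (induction m)
  case 0 then show ?case by (simp add: choose_two)
next
  case (Suc m)
  have e: "Suc (Suc (Suc m)) choose 2 = Suc (Suc m) + (Suc (Suc m) choose 2)"
    by (simp add: numeral_2_eq_2)
  then show ?case using Suc by simp
qed

lemma sum_rev_nat: "(\<Sum>b=a..a+m. h (a + m - b::nat)) = (\<Sum>j=0..m. (h j :: nat))"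
proof (induction m arbitrary: a)
  case 0 then show ?case by (simp add: choose_two)
next
  case (Suc m)
  have "(\<Sum>b=a..a+Suc m. h (a + Suc m - b)) = h (Suc m) + (\<Sum>b=Suc a..Suc a+m. h (Suc a + m - b))"
    by (subst sum.atLeast_Suc_atMost) auto
  also have "\<dots> = h (Suc m) + (\<Sum>j=0..m. h j)" by (simp only: Suc.IH[of "Suc a"])
  finally show ?case by simp
qed



lemma children_L: "children (L n) t = (if t < n then {Suc t} else {})"
  by (auto simp: children_def L_def edges_def root_def par_def)
lemma edges_L: "edges (L n) = {0..n}" and root_L: "root (L n) = 0"
  by (simp_all add: L_def edges_def root_def)
lemma leaves_L: "leaves (L n) = {n}"
  unfolding leaves_def children_L edges_L by auto

definition ancS :: "'e rtree \<Rightarrow> 'e \<Rightarrow> 'e \<Rightarrow> bool" where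
  "ancS T x y \<longleftrightarrow> (\<exists>k. (par T ^^ k) y = x)"

lemma ancS_refl: "ancS T x x"
  unfolding ancS_def by (rule exI[of _ 0]) simp

lemma ancS_trans: "ancS T x y \<Longrightarrow> ancS T y z \<Longrightarrow> ancS T x z"
  unfolding ancS_def by (metis funpow_add o_apply)

lemma ancS_par: "ancS T (par T y) y"
  unfolding ancS_def by (rule exI[of _ 1]) simp

lemma children_memD: "c \<in> children T s \<Longrightarrow> c \<in> edges T \<and> c \<noteq> root T \<and> par T c = s"
  by (auto simp: children_def)

locale shS =
  fixes S :: "nat rtree" and d :: "nat \<Rightarrow> nat" and n :: nat
  assumes fin: "finite (edges S)"
  and rootin: "root S \<in> edges S"
  and parin: "\<And>s. s \<in> edges S \<Longrightarrow> par S s \<in> edges S"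
  and parroot: "par S (root S) = root S"
  and droot: "d (root S) = 0"
  and dpar: "\<And>s. s \<in> edges S \<Longrightarrow> s \<noteq> root S \<Longrightarrow> d (par S s) + 1 = d s"
  and leafbelow: "\<And>s. s \<in> edges S \<Longrightarrow> s \<notin> leaves S \<Longrightarrow> \<exists>l\<in>leaves S. ancS S s l"
begin

lemma d_zero: "s \<in> edges S \<Longrightarrow> d s = 0 \<Longrightarrow> s = root S"
  using dpar by fastforce

lemma funpow_in: "s \<in> edges S \<Longrightarrow> (par S ^^ k) s \<in> edges S"
  by (induction k) (auto intro: parin)

lemma funpow_root: "(par S ^^ k) (root S) = root S"
  by (induction k) (auto simp: parroot)

lemma d_par1: "z \<in> edges S \<Longrightarrow> d (par S z) = d z - 1"
  using dpar[of z] by (cases "z = root S") (auto simp: parroot droot)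

lemma d_funpow: "s \<in> edges S \<Longrightarrow> d ((par S ^^ k) s) = d s - k"
  by (induction k) (auto simp: d_par1 funpow_in)

lemma anc_d: "ancS S x y \<Longrightarrow> y \<in> edges S \<Longrightarrow> d x \<le> d y \<and> x \<in> edges S"
  unfolding ancS_def using d_funpow funpow_in by auto

lemma anc_eq: "ancS S x y \<Longrightarrow> y \<in> edges S \<Longrightarrow> d x = d y \<Longrightarrow> x = y"
proof -
  assume a: "ancS S x y" "y \<in> edges S" "d x = d y"
  then obtain k where k: "(par S ^^ k) y = x" by (auto simp: ancS_def)
  have "d y - k = d y" using d_funpow[OF a(2), of k] k a(3) by simp
  then have "k = 0 \<or> d y = 0" by arith
  then show "x = y"
  proof
    assume "k = 0" then show ?thesis using k by simp
  next
    assume "d y = 0" then have "y = root S" using d_zero a(2) by simp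
    then show ?thesis using k funpow_root by simp
  qed
qed

lemma anc_antisym: "ancS S x y \<Longrightarrow> ancS S y x \<Longrightarrow> y \<in> edges S \<Longrightarrow> x = y"
  using anc_d anc_eq by (meson le_antisym)

lemma not_anc_par: "s \<in> edges S \<Longrightarrow> s \<noteq> root S \<Longrightarrow> \<not> ancS S s (par S s)"
  using anc_d[of s "par S s"] dpar[of s] parin[of s] by auto

lemma par_neq: "s \<in> edges S \<Longrightarrow> s \<noteq> root S \<Longrightarrow> par S s \<noteq> s"
  using not_anc_par ancS_refl by metis

lemma anc_child: "ancS S x y \<Longrightarrow> x \<noteq> y \<Longrightarrow> ancS S x (par S y)"
  unfolding ancS_def by (metis funpow_0 funpow_Suc_right o_apply not0_implies_Suc)

lemma siblings:
  assumes c: "c1 \<in> edges S" "c1 \<noteq> root S" "c2 \<in> edges S" "c2 \<noteq> root S"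
    and p: "par S c1 = par S c2" and ne: "c1 \<noteq> c2"
    and a: "ancS S c1 y" "ancS S c2 y"
  shows False
proof -
  have key: "\<And>c1 c2 k1 k2. c2 \<in> edges S \<Longrightarrow> c2 \<noteq> root S \<Longrightarrow> par S c1 = par S c2 \<Longrightarrow>
      (par S ^^ k1) y = c1 \<Longrightarrow> (par S ^^ k2) y = c2 \<Longrightarrow> k1 < k2 \<Longrightarrow> False"
  proof -
    fix c1 c2 k1 k2
    assume h: "c2 \<in> edges S" "c2 \<noteq> root S" "par S c1 = par S c2"
      "(par S ^^ k1) y = c1" "(par S ^^ k2) y = c2" "k1 < k2"
    have "k2 = (k2 - k1 - 1) + 1 + k1" using h(6) by simp
    then have "(par S ^^ k2) y = (par S ^^ (k2 - k1 - 1)) (par S ((par S ^^ k1) y))"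
      by (metis funpow_add funpow_Suc_right funpow_0 o_apply add.commute plus_1_eq_Suc)
    then have "(par S ^^ (k2 - k1 - 1)) (par S c2) = c2" using h by simp
    then have "ancS S c2 (par S c2)" by (auto simp: ancS_def)
    then show False using not_anc_par h by blast
  qed
  obtain k1 k2 where k: "(par S ^^ k1) y = c1" "(par S ^^ k2) y = c2" using a by (auto simp: ancS_def)
  show False
  proof (cases k1 k2 rule: linorder_cases)
    case less then show ?thesis using key[of c2 c1 k1 k2] c p k by simp
  next
    case equal then show ?thesis using k ne by simp
  next
    case greater then show ?thesis using key[of c1 c2 k2 k1] c p k by simp
  qed
qed

end



locale shA = shS +
  fixes A :: "nat rtree" and lab :: "nat \<Rightarrow> nat \<times> nat"
  assumes shuf: "is_shuffle S (L n) A lab"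
begin

lemma treeA: "is_tree A" using shuf by (simp add: is_shuffle_def)
lemma labin: "e \<in> edges A \<Longrightarrow> lab e \<in> edges S \<times> {0..n}"
  using shuf by (auto simp: is_shuffle_def edges_L)
lemma labroot: "lab (root A) = (root S, 0)" using shuf by (simp add: is_shuffle_def root_L)
lemma lableaves: "bij_betw lab (leaves A) (leaves S \<times> {n})"
  using shuf by (simp add: is_shuffle_def leaves_L)
lemma move: "e \<in> edges A \<Longrightarrow> e \<notin> leaves A \<Longrightarrow>
   bij_betw lab (children A e) (children S (fst (lab e)) \<times> {snd (lab e)})
 \<or> bij_betw lab (children A e) ({fst (lab e)} \<times> children (L n) (snd (lab e)))"
  using shuf by (auto simp: is_shuffle_def)

lemma rootA: "root A \<in> edges A" using treeA by (simp add: is_tree_def)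
lemma parA: "e \<in> edges A \<Longrightarrow> e \<noteq> root A \<Longrightarrow> par A e \<in> edges A"
  using treeA by (simp add: is_tree_def)

definition Lam where "Lam = lab ` edges A"
definition rho where "rho e = d (fst (lab e)) + snd (lab e)"

lemma children_sub: "children A e \<subseteq> edges A" by (auto simp: children_def)

lemma pstep:
  assumes e: "e \<in> edges A" "e \<noteq> root A"
  shows "par A e \<in> edges A \<and> e \<in> children A (par A e) \<and> par A e \<notin> leaves A \<and>
    ((fst (lab e) \<in> children S (fst (lab (par A e))) \<and> snd (lab e) = snd (lab (par A e)))
     \<or> (fst (lab e) = fst (lab (par A e)) \<and> snd (lab e) = Suc (snd (lab (par A e)))))"
proof -
  let ?p = "par A e"
  have p: "?p \<in> edges A" using parA e by simp
  have c: "e \<in> children A ?p" using e by (auto simp: children_def)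
  have nl: "?p \<notin> leaves A" using c by (auto simp: leaves_def)
  have "lab e \<in> children S (fst (lab ?p)) \<times> {snd (lab ?p)}
     \<or> lab e \<in> {fst (lab ?p)} \<times> children (L n) (snd (lab ?p))"
    using move[OF p nl] c bij_betwE by blast
  then have "(fst (lab e) \<in> children S (fst (lab (par A e))) \<and> snd (lab e) = snd (lab (par A e)))
     \<or> (fst (lab e) = fst (lab (par A e)) \<and> snd (lab e) = Suc (snd (lab (par A e))))"
  proof
    assume "lab e \<in> children S (fst (lab ?p)) \<times> {snd (lab ?p)}"
    then show ?thesis by (simp add: mem_Times_iff)
  next
    assume "lab e \<in> {fst (lab ?p)} \<times> children (L n) (snd (lab ?p))"
    then have "fst (lab e) = fst (lab ?p)" "snd (lab e) \<in> children (L n) (snd (lab ?p))"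
      by (simp_all add: mem_Times_iff)
    then show ?thesis unfolding children_L by (simp split: if_splits)
  qed
  then show ?thesis using p c nl by blast
qed

lemma rho_par: "e \<in> edges A \<Longrightarrow> e \<noteq> root A \<Longrightarrow> rho (par A e) + 1 = rho e"
proof -
  assume e: "e \<in> edges A" "e \<noteq> root A"
  note ps = pstep[OF e]
  show ?thesis
  proof (cases "fst (lab e) \<in> children S (fst (lab (par A e))) \<and> snd (lab e) = snd (lab (par A e))")
    case True
    then have "fst (lab e) \<in> edges S \<and> fst (lab e) \<noteq> root S \<and> par S (fst (lab e)) = fst (lab (par A e))"
      using children_memD[of "fst (lab e)" S "fst (lab (par A e))"] by simp
    then show ?thesis using dpar[of "fst (lab e)"] True by (simp add: rho_def)
  next
    case False
    then have "fst (lab e) = fst (lab (par A e)) \<and> snd (lab e) = Suc (snd (lab (par A e)))"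
      using ps by blast
    then show ?thesis by (simp add: rho_def)
  qed
qed

lemma rho_root: "e \<in> edges A \<Longrightarrow> rho e = 0 \<Longrightarrow> e = root A"
proof (rule ccontr)
  assume "e \<in> edges A" "rho e = 0" "e \<noteq> root A"
  then show False using rho_par[of e] by simp
qed

lemma path:
  assumes e: "e \<in> edges A"
  shows "j \<le> rho e \<Longrightarrow> (par A ^^ j) e \<in> edges A \<and> rho ((par A ^^ j) e) + j = rho e
     \<and> ancS S (fst (lab ((par A ^^ j) e))) (fst (lab e)) \<and> snd (lab ((par A ^^ j) e)) \<le> snd (lab e)"
proof (induction j)
  case 0 then show ?case using e by (simp add: ancS_refl)
next
  case (Suc j)
  let ?x = "(par A ^^ j) e"
  have IH: "?x \<in> edges A" "rho ?x + j = rho e" "ancS S (fst (lab ?x)) (fst (lab e))"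
    "snd (lab ?x) \<le> snd (lab e)" using Suc by auto
  have nr: "?x \<noteq> root A" using IH(2) Suc.prems labroot droot by (auto simp: rho_def)
  note ps = pstep[OF IH(1) nr]
  have rp: "rho (par A ?x) + 1 = rho ?x" using rho_par[OF IH(1) nr] .
  have an: "ancS S (fst (lab (par A ?x))) (fst (lab ?x))"
    using ps children_memD[of "fst (lab ?x)" S "fst (lab (par A ?x))"] ancS_par[of S "fst (lab ?x)"]
      ancS_refl[of S "fst (lab ?x)"] by auto
  show ?case using ps rp IH an ancS_trans[OF an IH(3)] by auto
qed

lemma path_root: "e \<in> edges A \<Longrightarrow> (par A ^^ rho e) e = root A"
  using path[of e "rho e"] rho_root by auto

definition ancA where "ancA x y \<longleftrightarrow> (\<exists>j \<le> rho y. (par A ^^ j) y = x)"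

lemma lca:
  assumes e: "e1 \<in> edges A" "e2 \<in> edges A" and n1: "\<not> ancA e1 e2" and n2: "\<not> ancA e2 e1"
  shows "\<exists>m a1 a2. m \<in> edges A \<and> a1 \<in> children A m \<and> a2 \<in> children A m \<and> a1 \<noteq> a2
     \<and> ancA a1 e1 \<and> ancA a2 e2"
proof -
  define J where "J = {j. j \<le> rho e1 \<and> (\<exists>i \<le> rho e2. (par A ^^ j) e1 = (par A ^^ i) e2)}"
  have "rho e1 \<in> J" unfolding J_def using path_root e by auto
  then have jJ: "Least (\<lambda>j. j \<in> J) \<in> J" by (rule LeastI)
  define j where "j = Least (\<lambda>j. j \<in> J)"
  have jmin: "\<And>k. k \<in> J \<Longrightarrow> j \<le> k" unfolding j_def by (rule Least_le)
  obtain i where i: "i \<le> rho e2" "(par A ^^ j) e1 = (par A ^^ i) e2" "j \<le> rho e1"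
    using jJ unfolding J_def j_def by auto
  have j0: "j \<noteq> 0"
  proof
    assume "j = 0" then have "e1 = (par A ^^ i) e2" using i by simp
    then show False using n1 i(1) unfolding ancA_def by blast
  qed
  have i0: "i \<noteq> 0"
  proof
    assume "i = 0" then have "e2 = (par A ^^ j) e1" using i by simp
    then show False using n2 i(3) unfolding ancA_def by blast
  qed
  define a1 where "a1 = (par A ^^ (j - 1)) e1"
  define a2 where "a2 = (par A ^^ (i - 1)) e2"
  define m where "m = (par A ^^ j) e1"
  have pa1: "par A a1 = m" unfolding a1_def m_def using j0 by (cases j) simp_all
  have pa2: "par A a2 = m" unfolding a2_def m_def using i0 i(2) by (cases i) simp_all
  have P1: "a1 \<in> edges A" "rho a1 + (j - 1) = rho e1" using path[OF e(1), of "j - 1"] i unfolding a1_def by auto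
  have P2: "a2 \<in> edges A" "rho a2 + (i - 1) = rho e2" using path[OF e(2), of "i - 1"] i unfolding a2_def by auto
  have r1: "a1 \<noteq> root A" using P1 i j0 labroot droot by (auto simp: rho_def)
  have r2: "a2 \<noteq> root A" using P2 i i0 labroot droot by (auto simp: rho_def)
  have ne: "a1 \<noteq> a2"
  proof
    assume "a1 = a2"
    moreover have "i - 1 \<le> rho e2" using i by simp
    ultimately have "j - 1 \<in> J" unfolding J_def a1_def a2_def using i by auto
    then show False using jmin j0 by fastforce
  qed
  have m: "m \<in> edges A" using path[OF e(1), of j] i unfolding m_def by auto
  have x1: "ancA a1 e1" unfolding ancA_def a1_def using i by (intro exI[of _ "j - 1"]) auto
  have x2: "ancA a2 e2" unfolding ancA_def a2_def using i by (intro exI[of _ "i - 1"]) auto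
  have "a1 \<in> children A m" "a2 \<in> children A m" using P1 P2 r1 r2 pa1 pa2 unfolding children_def by auto
  then show ?thesis using m x1 x2 ne by blast
qed

lemma conflict:
  assumes e: "e1 \<in> edges A" "e2 \<in> edges A" and n1: "\<not> ancA e1 e2" and n2: "\<not> ancA e2 e1"
    and y: "ancS S (fst (lab e1)) y" "ancS S (fst (lab e2)) y"
  shows False
proof -
  obtain m a1 a2 where m: "m \<in> edges A" "a1 \<in> children A m" "a2 \<in> children A m" "a1 \<noteq> a2"
     "ancA a1 e1" "ancA a2 e2"
    using lca[OF e n1 n2] by blast
  have nl: "m \<notin> leaves A" using m(2) by (auto simp: leaves_def)
  have an1: "ancS S (fst (lab a1)) (fst (lab e1))" using m(5) path[OF e(1)] unfolding ancA_def by blast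
  have an2: "ancS S (fst (lab a2)) (fst (lab e2))" using m(6) path[OF e(2)] unfolding ancA_def by blast
  from move[OF m(1) nl] show False
  proof
    assume b: "bij_betw lab (children A m) (children S (fst (lab m)) \<times> {snd (lab m)})"
    then have "lab a1 \<noteq> lab a2" using m(2-4) by (meson bij_betw_def inj_on_def)
    moreover have "lab a1 \<in> children S (fst (lab m)) \<times> {snd (lab m)}"
       "lab a2 \<in> children S (fst (lab m)) \<times> {snd (lab m)}" using b m(2,3) by (meson bij_betwE)+
    ultimately have "fst (lab a1) \<noteq> fst (lab a2)" "fst (lab a1) \<in> children S (fst (lab m))"
       "fst (lab a2) \<in> children S (fst (lab m))" by (auto simp: prod_eq_iff)
    moreover note c1 = children_memD[of "fst (lab a1)" S "fst (lab m)"]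
    moreover note c2 = children_memD[of "fst (lab a2)" S "fst (lab m)"]
    ultimately show False using siblings[of "fst (lab a1)" "fst (lab a2)" y,
       OF _ _ _ _ _ _ ancS_trans[OF an1 y(1)] ancS_trans[OF an2 y(2)]] by auto
  next
    assume b: "bij_betw lab (children A m) ({fst (lab m)} \<times> children (L n) (snd (lab m)))"
    have "lab a1 \<in> {fst (lab m)} \<times> children (L n) (snd (lab m))"
       "lab a2 \<in> {fst (lab m)} \<times> children (L n) (snd (lab m))" using b m(2,3) by (meson bij_betwE)+
    then have "lab a1 = lab a2" by (auto simp: children_L split: if_splits)
    then show False using b m(2-4) by (meson bij_betw_def inj_on_def)
  qed
qed

lemma lab_inj: "inj_on lab (edges A)"
proof (rule inj_onI)
  fix e1 e2 assume e: "e1 \<in> edges A" "e2 \<in> edges A" and l: "lab e1 = lab e2"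
  show "e1 = e2"
  proof (rule ccontr)
    assume ne: "e1 \<noteq> e2"
    have "\<not> ancA e1 e2"
    proof
      assume "ancA e1 e2"
      then obtain j where "j \<le> rho e2" "(par A ^^ j) e2 = e1" by (auto simp: ancA_def)
      then show False using path[OF e(2), of j] l ne by (auto simp: rho_def)
    qed
    moreover have "\<not> ancA e2 e1"
    proof
      assume "ancA e2 e1"
      then obtain j where "j \<le> rho e1" "(par A ^^ j) e1 = e2" by (auto simp: ancA_def)
      then show False using path[OF e(1), of j] l ne by (auto simp: rho_def)
    qed
    moreover have r2: "ancS S (fst (lab e2)) (fst (lab e1))" using l ancS_refl by metis
    ultimately show False using conflict[OF e _ _ ancS_refl r2] by blast
  qed
qed

lemma Lam_edges: "(x, a) \<in> Lam \<Longrightarrow> x \<in> edges S \<and> a \<le> n"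
proof -
  assume "(x, a) \<in> Lam"
  then obtain e where "e \<in> edges A" "lab e = (x, a)" by (auto simp: Lam_def)
  then show ?thesis using labin[of e] by simp
qed

lemma CL:
  assumes "(x, a) \<in> Lam" "(y, b) \<in> Lam" "ancS S x y" "x \<noteq> y"
  shows "a \<le> b"
proof -
  obtain e1 e2 where e: "e1 \<in> edges A" "e2 \<in> edges A" "lab e1 = (x, a)" "lab e2 = (y, b)"
    using assms(1,2) by (auto simp: Lam_def)
  have yin: "y \<in> edges S" using Lam_edges assms(2) by blast
  show ?thesis
  proof (cases "ancA e1 e2")
    case True
    then obtain j where "j \<le> rho e2" "(par A ^^ j) e2 = e1" by (auto simp: ancA_def)
    then show ?thesis using path[OF e(2), of j] e by auto
  next
    case F1: False
    show ?thesis
    proof (cases "ancA e2 e1")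
      case True
      then obtain j where "j \<le> rho e1" "(par A ^^ j) e1 = e2" by (auto simp: ancA_def)
      then have "ancS S y x" using path[OF e(1), of j] e by auto
      then show ?thesis using anc_antisym assms(3,4) yin by blast
    next
      case False
      then show ?thesis using conflict[OF e(1,2) F1 False, of y] e(3,4) assms(3) ancS_refl[of S y] by simp
    qed
  qed
qed


lemma Lam_root: "(root S, 0) \<in> Lam" using labroot rootA by (auto simp: Lam_def intro: image_eqI[of _ lab "root A"])

lemma Lam_leaf: "l \<in> leaves S \<Longrightarrow> (l, n) \<in> Lam"
proof -
  assume "l \<in> leaves S"
  then have "(l, n) \<in> lab ` leaves A" using lableaves by (simp add: bij_betw_def)
  then show ?thesis by (auto simp: Lam_def leaves_def)
qed

lemma Lam_pred:
  assumes "(y, b) \<in> Lam" "(y, b) \<noteq> (root S, 0)"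
  shows "(y \<noteq> root S \<and> y \<in> edges S \<and> (par S y, b) \<in> Lam) \<or> (0 < b \<and> (y, b - 1) \<in> Lam)"
proof -
  obtain e where e: "e \<in> edges A" "lab e = (y, b)" using assms(1) by (auto simp: Lam_def)
  have nr: "e \<noteq> root A" using e assms(2) labroot by auto
  note ps = pstep[OF e(1) nr]
  have pin: "lab (par A e) \<in> Lam" using ps by (simp add: Lam_def)
  show ?thesis
  proof (cases "fst (lab e) \<in> children S (fst (lab (par A e))) \<and> snd (lab e) = snd (lab (par A e))")
    case True
    then have "y \<in> edges S \<and> y \<noteq> root S \<and> par S y = fst (lab (par A e))"
      using children_memD[of y S "fst (lab (par A e))"] e by simp
    then show ?thesis using True e pin by (cases "lab (par A e)") auto
  next
    case False
    then have "fst (lab e) = fst (lab (par A e)) \<and> snd (lab e) = Suc (snd (lab (par A e)))"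
      using ps by blast
    then show ?thesis using e pin by (cases "lab (par A e)") auto
  qed
qed

lemma pred_det:
  assumes e: "e \<in> edges A" "e \<noteq> root A" "lab e = (s, t)"
  shows "lab (par A e) = (if 0 < t \<and> (s, t - 1) \<in> Lam then (s, t - 1) else (par S s, t))"
proof -
  note ps = pstep[OF e(1,2)]
  have pin: "lab (par A e) \<in> Lam" using ps by (simp add: Lam_def)
  have fe: "fst (lab e) = s" "snd (lab e) = t" using e(3) by simp_all
  show ?thesis
  proof (cases "fst (lab e) \<in> children S (fst (lab (par A e))) \<and> snd (lab e) = snd (lab (par A e))")
    case True
    then have c: "s \<in> children S (fst (lab (par A e)))" "snd (lab (par A e)) = t"
      using fe by simp_all
    have s: "s \<in> edges S" "s \<noteq> root S" "par S s = fst (lab (par A e))"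
      using children_memD[OF c(1)] by simp_all
    have lp: "lab (par A e) = (par S s, t)" using s(3) c(2) by (simp add: prod_eq_iff)
    have pin': "(par S s, t) \<in> Lam" using pin lp by simp
    have nc: "\<not> (0 < t \<and> (s, t - 1) \<in> Lam)"
    proof
      assume h: "0 < t \<and> (s, t - 1) \<in> Lam"
      have "t \<le> t - 1"
        by (rule CL[OF pin' conjunct2[OF h] ancS_par[of S s] par_neq[OF s(1,2)]])
      then show False using conjunct1[OF h] by linarith
    qed
    show ?thesis by (simp only: lp if_not_P[OF nc])
  next
    case False
    then have h: "fst (lab e) = fst (lab (par A e)) \<and> snd (lab e) = Suc (snd (lab (par A e)))"
      using ps by blast
    then have lp: "lab (par A e) = (s, t - 1)" using fe by (simp add: prod_eq_iff)
    have "0 < t" using h fe by simp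
    then show ?thesis using pin lp by simp
  qed
qed

lemma move_exists:
  assumes "(y, b) \<in> Lam" "ancS S x y" "x \<noteq> y"
  shows "\<exists>a. (x, a) \<in> Lam \<and> (\<exists>c\<in>children S x. (c, a) \<in> Lam)"
  using assms
proof (induction "d y + b" arbitrary: y b rule: less_induct)
  case less
  have yin: "y \<in> edges S" using Lam_edges less.prems(1) by blast
  have nroot: "(y, b) \<noteq> (root S, 0)"
  proof
    assume "(y, b) = (root S, 0)"
    then show False using less.prems(2,3) funpow_root by (auto simp: ancS_def)
  qed
  from Lam_pred[OF less.prems(1) nroot] show ?case
  proof
    assume h: "y \<noteq> root S \<and> y \<in> edges S \<and> (par S y, b) \<in> Lam"
    show ?case
    proof (cases "x = par S y")
      case True
      have "y \<in> children S x" using h True by (auto simp: children_def)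
      then show ?thesis using h less.prems(1) True by blast
    next
      case False
      have "d (par S y) + b < d y + b" using dpar[of y] h by simp
      then show ?thesis using less.hyps[of "par S y" b] h anc_child[OF less.prems(2,3)] False by blast
    qed
  next
    assume h: "0 < b \<and> (y, b - 1) \<in> Lam"
    have "d y + (b - 1) < d y + b" using h by simp
    then show ?thesis using less.hyps[of y "b - 1"] h less.prems(2,3) by blast
  qed
qed

end

context shS begin
definition NL where "NL = edges S - leaves S"
definition lo where "lo \<tau> s = (if s = root S then 0 else \<tau> (par S s))"
definition hi where "hi \<tau> s = (if s \<in> NL then \<tau> s else n)"
definition LamT where "LamT \<tau> = {(s,t). s \<in> edges S \<and> lo \<tau> s \<le> t \<and> t \<le> hi \<tau> s}"
definition Mset where "Mset = {\<tau>. \<forall>s. (s \<in> NL \<longrightarrow> \<tau> s \<le> n \<and> (s \<noteq> root S \<longrightarrow> \<tau> (par S s) \<le> \<tau> s))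
   \<and> (s \<notin> NL \<longrightarrow> \<tau> s = 0)}"

lemma child_NL: "c \<in> children S s \<Longrightarrow> s \<in> edges S \<Longrightarrow> s \<in> NL"
  by (auto simp: NL_def leaves_def)

lemma par_NL: "s \<in> edges S \<Longrightarrow> s \<noteq> root S \<Longrightarrow> par S s \<in> NL \<and> s \<in> children S (par S s)"
  using parin[of s] by (auto simp: NL_def leaves_def children_def)

lemma child_anc: "c \<in> children S s \<Longrightarrow> s \<noteq> c \<and> ancS S s c"
proof -
  assume "c \<in> children S s"
  then have c: "c \<in> edges S" "c \<noteq> root S" "par S c = s" using children_memD[of c S s] by simp_all
  have "par S c \<noteq> c" using par_neq[OF c(1,2)] .
  then show ?thesis using ancS_par[of S c] c(3) by simp
qed
end

context shA begin

definition tauX where "tauX s = (LEAST t. (s,t) \<in> Lam \<and> (\<exists>c\<in>children S s. (c,t) \<in> Lam))"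
definition tX where "tX s = (if s \<in> NL then tauX s else 0)"

lemma tau_ex: "s \<in> NL \<Longrightarrow> (s, tauX s) \<in> Lam \<and> (\<exists>c\<in>children S s. (c, tauX s) \<in> Lam)"
proof -
  assume s: "s \<in> NL"
  then obtain l where l: "l \<in> leaves S" "ancS S s l" using leafbelow by (auto simp: NL_def)
  have "s \<noteq> l" using s l by (auto simp: NL_def)
  then obtain a where "(s, a) \<in> Lam \<and> (\<exists>c\<in>children S s. (c, a) \<in> Lam)"
    using move_exists[OF Lam_leaf[OF l(1)] l(2)] by blast
  then show ?thesis unfolding tauX_def by (rule LeastI)
qed

lemma tau_uniq:
  assumes su: "(s, u) \<in> Lam" and c: "c \<in> children S s" "(c, u) \<in> Lam"
  shows "u = tauX s"
proof -
  have sN: "s \<in> NL" using child_NL[OF c(1)] Lam_edges[OF su] by blast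
  have le: "tauX s \<le> u" unfolding tauX_def using su c by (intro Least_le) blast
  show ?thesis
  proof (rule ccontr)
    assume "u \<noteq> tauX s"
    then have lt: "tauX s < u" using le by simp
    obtain c' where c': "c' \<in> children S s" "(c', tauX s) \<in> Lam" using tau_ex[OF sN] by blast
    have "u \<le> tauX s" using CL[OF su c'(2)] child_anc[OF c'(1)] by blast
    then show False using lt by simp
  qed
qed

lemma edge_of: "(s, u) \<in> Lam \<Longrightarrow> \<exists>e. e \<in> edges A \<and> lab e = (s, u)"
  by (auto simp: Lam_def)

lemma leaf_lab: "e \<in> leaves A \<Longrightarrow> fst (lab e) \<in> leaves S \<and> snd (lab e) = n"
proof -
  assume "e \<in> leaves A"
  then have "lab e \<in> leaves S \<times> {n}" using lableaves bij_betwE by blast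
  then show ?thesis by (simp add: mem_Times_iff)
qed

lemma nonleaf_child: "e \<in> edges A \<Longrightarrow> e \<notin> leaves A \<Longrightarrow> \<exists>x. x \<in> children A e"
  by (auto simp: leaves_def)

lemma SM:
  assumes sN: "s \<in> NL" and c: "c \<in> children S s"
  shows "(c, tauX s) \<in> Lam"
proof -
  obtain e where e: "e \<in> edges A" "lab e = (s, tauX s)" using edge_of tau_ex[OF sN] by blast
  have nl: "e \<notin> leaves A" using leaf_lab[of e] e sN by (auto simp: NL_def)
  from move[OF e(1) nl] show ?thesis
  proof
    assume b: "bij_betw lab (children A e) (children S (fst (lab e)) \<times> {snd (lab e)})"
    then have "(c, tauX s) \<in> lab ` children A e" using c e(2) by (simp add: bij_betw_def)
    then show ?thesis using children_sub by (auto simp: Lam_def)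
  next
    assume b: "bij_betw lab (children A e) ({fst (lab e)} \<times> children (L n) (snd (lab e)))"
    obtain x where x: "x \<in> children A e" using nonleaf_child[OF e(1) nl] by blast
    have "lab x \<in> {s} \<times> children (L n) (tauX s)" using b x e(2) bij_betwE by fastforce
    then have lx: "lab x = (s, Suc (tauX s))" by (auto simp: children_L split: if_splits)
    have "(s, Suc (tauX s)) \<in> Lam" using lx x children_sub by (force simp: Lam_def)
    moreover obtain c0 where c0: "c0 \<in> children S s" "(c0, tauX s) \<in> Lam" using tau_ex[OF sN] by blast
    ultimately have "Suc (tauX s) \<le> tauX s" using CL child_anc[OF c0(1)] by blast
    then show ?thesis by simp
  qed
qed

lemma TM:
  assumes su: "(s, u) \<in> Lam" and un: "u < n" and nt: "s \<in> NL \<Longrightarrow> u \<noteq> tauX s"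
  shows "(s, Suc u) \<in> Lam"
proof -
  obtain e where e: "e \<in> edges A" "lab e = (s, u)" using edge_of su by blast
  have nl: "e \<notin> leaves A" using leaf_lab[of e] e un by auto
  obtain x where x: "x \<in> children A e" using nonleaf_child[OF e(1) nl] by blast
  have xL: "lab x \<in> Lam" using x children_sub by (auto simp: Lam_def)
  from move[OF e(1) nl] show ?thesis
  proof
    assume b: "bij_betw lab (children A e) (children S (fst (lab e)) \<times> {snd (lab e)})"
    have "lab x \<in> children S s \<times> {u}" using b x e(2) bij_betwE by fastforce
    then have c: "fst (lab x) \<in> children S s" "lab x = (fst (lab x), u)" by (auto simp: prod_eq_iff)
    have "u = tauX s" using tau_uniq[OF su c(1)] xL c(2) by simp
    moreover have "s \<in> NL" using child_NL[OF c(1)] Lam_edges[OF su] by blast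
    ultimately show ?thesis using nt by simp
  next
    assume b: "bij_betw lab (children A e) ({fst (lab e)} \<times> children (L n) (snd (lab e)))"
    have "lab x \<in> {s} \<times> children (L n) u" using b x e(2) bij_betwE by fastforce
    then have lx: "lab x = (s, Suc u)" by (auto simp: children_L split: if_splits)
    then show ?thesis using xL by simp
  qed
qed

lemma tX_M: "tX \<in> Mset"
  unfolding Mset_def
proof (intro CollectI allI conjI impI)
  fix s assume sN: "s \<in> NL"
  show "tX s \<le> n" using tau_ex[OF sN] Lam_edges sN by (auto simp: tX_def)
  assume nr: "s \<noteq> root S"
  have sE: "s \<in> edges S" using sN by (simp add: NL_def)
  have pN: "par S s \<in> NL" using par_NL[OF sE nr] by blast
  have "tauX (par S s) \<le> tauX s"
    using CL[of "par S s" "tauX (par S s)" s "tauX s"] tau_ex[OF pN] tau_ex[OF sN]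
      ancS_par[of S s] par_neq[OF sE nr] by blast
  then show "tX (par S s) \<le> tX s" using sN pN by (simp add: tX_def)
next
  fix s assume "s \<notin> NL" then show "tX s = 0" by (simp add: tX_def)
qed

lemma Lam_eq: "Lam = LamT tX"
proof (intro set_eqI iffI)
  fix x assume xL: "x \<in> Lam"
  obtain s t where x: "x = (s, t)" by (cases x)
  have st: "s \<in> edges S" "t \<le> n" using Lam_edges xL x by auto
  have up: "t \<le> hi tX s"
  proof (cases "s \<in> NL")
    case True
    show ?thesis
    proof (rule ccontr)
      assume "\<not> t \<le> hi tX s"
      then have lt: "tauX s < t" using True by (simp add: hi_def tX_def)
      obtain c where c: "c \<in> children S s" "(c, tauX s) \<in> Lam" using tau_ex[OF True] by blast
      have "t \<le> tauX s" using CL[of s t c "tauX s"] xL x c child_anc[OF c(1)] by blast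
      then show False using lt by simp
    qed
  next
    case False then show ?thesis using st by (simp add: hi_def)
  qed
  have low: "lo tX s \<le> t"
  proof (cases "s = root S")
    case True then show ?thesis by (simp add: lo_def)
  next
    case False
    have pN: "par S s \<in> NL" using par_NL[OF st(1) False] by blast
    have "tauX (par S s) \<le> t"
      using CL[of "par S s" "tauX (par S s)" s t] tau_ex[OF pN] xL x
      ancS_par[of S s] par_neq[OF st(1) False] by blast
    then show ?thesis using False pN by (simp add: lo_def tX_def)
  qed
  show "x \<in> LamT tX" using x st up low by (simp add: LamT_def)
next
  fix x assume "x \<in> LamT tX"
  then obtain s t where x: "x = (s, t)" and s: "s \<in> edges S" and b: "lo tX s \<le> t" "t \<le> hi tX s"
    by (auto simp: LamT_def)
  have hn: "hi tX s \<le> n" using tX_M s unfolding Mset_def hi_def by auto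
  have "\<forall>t. lo tX s \<le> t \<longrightarrow> t \<le> hi tX s \<longrightarrow> (s, t) \<in> Lam"
  proof
    fix t show "lo tX s \<le> t \<longrightarrow> t \<le> hi tX s \<longrightarrow> (s, t) \<in> Lam"
    proof (induction t)
      case 0
      show ?case
      proof (intro impI)
        assume "lo tX s \<le> 0"
        show "(s, 0) \<in> Lam"
        proof (cases "s = root S")
          case True then show ?thesis using Lam_root by simp
        next
          case False
          have pN: "par S s \<in> NL" "s \<in> children S (par S s)" using par_NL[OF s False] by blast+
          have "tauX (par S s) = 0" using \<open>lo tX s \<le> 0\<close> False pN by (simp add: lo_def tX_def)
          then show ?thesis using SM[OF pN] by simp
        qed
      qed
    next
      case (Suc t)
      show ?case
      proof (intro impI)
        assume l: "lo tX s \<le> Suc t" and h: "Suc t \<le> hi tX s"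
        show "(s, Suc t) \<in> Lam"
        proof (cases "lo tX s = Suc t")
          case True
          then have nr: "s \<noteq> root S" by (simp add: lo_def split: if_splits)
          have pN: "par S s \<in> NL" "s \<in> children S (par S s)" using par_NL[OF s nr] by blast+
          have "tauX (par S s) = Suc t" using True nr pN by (simp add: lo_def tX_def)
          then show ?thesis using SM[OF pN] by simp
        next
          case False
          then have st: "(s, t) \<in> Lam" using Suc l h by simp
          have "t < n" using h hn by simp
          moreover have "s \<in> NL \<Longrightarrow> t \<noteq> tauX s" using h by (simp add: hi_def tX_def)
          ultimately show ?thesis using TM[OF st] by blast
        qed
      qed
    qed
  qed
  then show "x \<in> Lam" using x b by blast
qed

end



lemma bij_dec: "bij_betw prod_decode (prod_encode ` C) C"
proof -
  have "inj_on prod_decode (prod_encode ` C)" by (rule inj_on_subset[OF inj_prod_decode subset_UNIV])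
  moreover have "prod_decode ` prod_encode ` C = C" by (simp add: image_image)
  ultimately show ?thesis by (simp add: bij_betw_def)
qed

context shS begin

lemma M_lohi: "\<tau> \<in> Mset \<Longrightarrow> s \<in> edges S \<Longrightarrow> lo \<tau> s \<le> hi \<tau> s \<and> hi \<tau> s \<le> n"
proof -
  assume t: "\<tau> \<in> Mset" and s: "s \<in> edges S"
  have M: "\<And>s. s \<in> NL \<Longrightarrow> \<tau> s \<le> n \<and> (s \<noteq> root S \<longrightarrow> \<tau> (par S s) \<le> \<tau> s)"
    using t by (auto simp: Mset_def)
  show ?thesis
  proof (cases "s = root S")
    case True then show ?thesis using M by (auto simp: lo_def hi_def)
  next
    case False
    have pN: "par S s \<in> NL" using par_NL[OF s False] by blast
    then show ?thesis using M[OF pN] M[of s] False by (auto simp: lo_def hi_def)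
  qed
qed

definition Pm where "Pm \<tau> x = (if lo \<tau> (fst x) < snd x then (fst x, snd x - 1) else (par S (fst x), snd x))"
definition rhoT where "rhoT x = d (fst x) + snd (x::nat \<times> nat)"
definition Ch where "Ch \<tau> x = (if snd x < hi \<tau> (fst x) then {(fst x, Suc (snd x))}
   else if fst x \<in> NL then children S (fst x) \<times> {snd x} else {})"
definition Atr where "Atr \<tau> = (prod_encode ` LamT \<tau>, prod_encode (root S, 0), \<lambda>m. prod_encode (Pm \<tau> (prod_decode m)))"

lemma C1: "\<tau> \<in> Mset \<Longrightarrow> (root S, 0) \<in> LamT \<tau>"
  using rootin by (simp add: LamT_def lo_def)

lemma C2:
  assumes t: "\<tau> \<in> Mset" and x: "x \<in> LamT \<tau>" "x \<noteq> (root S, 0)"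
  shows "Pm \<tau> x \<in> LamT \<tau> \<and> rhoT (Pm \<tau> x) + 1 = rhoT x"
proof -
  obtain s u where xs: "x = (s, u)" by (cases x)
  have s: "s \<in> edges S" "lo \<tau> s \<le> u" "u \<le> hi \<tau> s" using x xs by (auto simp: LamT_def)
  show ?thesis
  proof (cases "lo \<tau> s < u")
    case True
    then show ?thesis using s xs by (auto simp: Pm_def LamT_def rhoT_def)
  next
    case False
    then have u: "u = lo \<tau> s" using s by simp
    have nr: "s \<noteq> root S" using x xs u by (auto simp: lo_def)
    have pN: "par S s \<in> NL" using par_NL[OF s(1) nr] by blast
    have pe: "par S s \<in> edges S" using parin s by blast
    have u2: "u = \<tau> (par S s)" using u nr by (simp add: lo_def)
    have lh: "lo \<tau> (par S s) \<le> hi \<tau> (par S s)" using M_lohi[OF t pe] by blast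
    have "Pm \<tau> x = (par S s, u)" using False xs by (simp add: Pm_def)
    moreover have "(par S s, u) \<in> LamT \<tau>" using pe lh u2 pN by (simp add: LamT_def hi_def)
    moreover have "rhoT (par S s, u) + 1 = rhoT x" using dpar[OF s(1) nr] xs by (simp add: rhoT_def)
    ultimately show ?thesis by simp
  qed
qed

lemma C3: "\<tau> \<in> Mset \<Longrightarrow> x \<in> LamT \<tau> \<Longrightarrow> (Pm \<tau> ^^ rhoT x) x = (root S, 0)"
proof (induction "rhoT x" arbitrary: x)
  case 0
  obtain s u where xs: "x = (s, u)" by (cases x)
  have "s \<in> edges S" using 0 xs by (simp add: LamT_def)
  then show ?case using 0 xs d_zero by (simp add: rhoT_def)
next
  case (Suc k)
  obtain s u where xs: "x = (s, u)" by (cases x)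
  have nr: "x \<noteq> (root S, 0)" using Suc.hyps(2) droot by (auto simp: rhoT_def)
  note c = C2[OF Suc.prems nr]
  have "(Pm \<tau> ^^ rhoT (Pm \<tau> x)) (Pm \<tau> x) = (root S, 0)" using Suc c by simp
  moreover have "rhoT x = Suc (rhoT (Pm \<tau> x))" using c by simp
  ultimately show ?case by (simp add: funpow_Suc_right del: funpow.simps)
qed

lemma C4:
  assumes t: "\<tau> \<in> Mset" and x: "x \<in> LamT \<tau>"
  shows "{y \<in> LamT \<tau>. y \<noteq> (root S, 0) \<and> Pm \<tau> y = x} = Ch \<tau> x"
proof -
  obtain s u where xs: "x = (s, u)" by (cases x)
  have s: "s \<in> edges S" "lo \<tau> s \<le> u" "u \<le> hi \<tau> s" using x xs by (auto simp: LamT_def)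
  have M: "\<And>s. s \<in> NL \<Longrightarrow> \<tau> s \<le> n \<and> (s \<noteq> root S \<longrightarrow> \<tau> (par S s) \<le> \<tau> s)"
    using t by (auto simp: Mset_def)
  show ?thesis
  proof (intro set_eqI iffI)
    fix y assume "y \<in> {y \<in> LamT \<tau>. y \<noteq> (root S, 0) \<and> Pm \<tau> y = x}"
    then obtain s' u' where y: "y = (s', u')" "s' \<in> edges S" "lo \<tau> s' \<le> u'" "u' \<le> hi \<tau> s'"
      "y \<noteq> (root S, 0)" "Pm \<tau> y = x" by (cases y) (auto simp: LamT_def)
    show "y \<in> Ch \<tau> x"
    proof (cases "lo \<tau> s' < u'")
      case True
      then have "s' = s" "u' = Suc u" using y xs by (auto simp: Pm_def)
      then show ?thesis using y xs by (auto simp: Ch_def)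
    next
      case False
      then have "s = par S s'" "u = u'" using y xs by (auto simp: Pm_def)
      moreover have nr: "s' \<noteq> root S" using y False by (auto simp: lo_def)
      moreover have "par S s' \<in> NL \<and> s' \<in> children S (par S s')" using par_NL[OF y(2) nr] .
      moreover have "u' = \<tau> (par S s')" using False y nr by (simp add: lo_def)
      ultimately show ?thesis using y xs by (auto simp: Ch_def hi_def)
    qed
  next
    fix y assume yC: "y \<in> Ch \<tau> x"
    show "y \<in> {y \<in> LamT \<tau>. y \<noteq> (root S, 0) \<and> Pm \<tau> y = x}"
    proof (cases "u < hi \<tau> s")
      case True
      then have "y = (s, Suc u)" using yC xs by (simp add: Ch_def)
      then show ?thesis using True s xs by (auto simp: LamT_def Pm_def)
    next
      case False
      then have sN: "s \<in> NL" and uh: "u = \<tau> s" and yc: "y \<in> children S s \<times> {u}" using yC xs s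
        by (auto simp: Ch_def hi_def split: if_splits)
      then obtain c where c: "y = (c, u)" "c \<in> children S s" by auto
      have cc: "c \<in> edges S" "c \<noteq> root S" "par S c = s" using children_memD[OF c(2)] by simp_all
      have "u \<le> hi \<tau> c"
      proof (cases "c \<in> NL")
        case True then show ?thesis using M[OF True] cc uh by (simp add: hi_def)
      next
        case False then show ?thesis using M[OF sN] uh by (simp add: hi_def)
      qed
      moreover have "lo \<tau> c = u" using cc uh by (simp add: lo_def)
      ultimately show ?thesis using c cc xs by (auto simp: LamT_def Pm_def)
    qed
  qed
qed

lemma Ch_empty:
  assumes t: "\<tau> \<in> Mset" and x: "(s, u) \<in> LamT \<tau>"
  shows "Ch \<tau> (s, u) = {} \<longleftrightarrow> s \<in> leaves S \<and> u = n"
proof -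
  have s: "s \<in> edges S" "lo \<tau> s \<le> u" "u \<le> hi \<tau> s" using x by (auto simp: LamT_def)
  have "s \<in> NL \<Longrightarrow> children S s \<noteq> {}" by (auto simp: NL_def leaves_def)
  then show ?thesis using s by (auto simp: Ch_def hi_def NL_def)
qed

lemma constr:
  assumes t: "\<tau> \<in> Mset"
  shows "is_shuffle S (L n) (Atr \<tau>) prod_decode \<and> prod_decode ` edges (Atr \<tau>) = LamT \<tau>"
proof -
  let ?A = "Atr \<tau>"
  have eA: "edges ?A = prod_encode ` LamT \<tau>" and rA: "root ?A = prod_encode (root S, 0)"
    and pA: "\<And>m. par ?A m = prod_encode (Pm \<tau> (prod_decode m))"
    by (simp_all add: Atr_def edges_def root_def par_def)
  have Lsub: "LamT \<tau> \<subseteq> edges S \<times> {0..n}" using M_lohi[OF t] by (fastforce simp: LamT_def)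
  have finL: "finite (LamT \<tau>)" using finite_subset[OF Lsub] fin by blast
  have pow: "\<And>k x. (par ?A ^^ k) (prod_encode x) = prod_encode ((Pm \<tau> ^^ k) x)"
  proof -
    fix k x show "(par ?A ^^ k) (prod_encode x) = prod_encode ((Pm \<tau> ^^ k) x)"
      by (induction k) (simp_all add: pA)
  qed
  have tree: "is_tree ?A"
    unfolding is_tree_def
  proof (intro conjI ballI)
    show "finite (edges ?A)" using finL eA by simp
    show "root ?A \<in> edges ?A" using C1[OF t] eA rA by simp
  next
    fix e assume e: "e \<in> edges ?A - {root ?A}"
    then obtain x where x: "e = prod_encode x" "x \<in> LamT \<tau>" "x \<noteq> (root S, 0)" using eA rA by auto
    then show "par ?A e \<in> edges ?A" using C2[OF t x(2,3)] eA pA by simp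
  next
    fix e assume e: "e \<in> edges ?A"
    then obtain x where x: "e = prod_encode x" "x \<in> LamT \<tau>" using eA by auto
    show "\<exists>k. (par ?A ^^ k) e = root ?A"
      using C3[OF t x(2)] pow x rA by metis
  qed
  have chA: "\<And>x. x \<in> LamT \<tau> \<Longrightarrow> children ?A (prod_encode x) = prod_encode ` Ch \<tau> x"
  proof -
    fix x assume x: "x \<in> LamT \<tau>"
    have "children ?A (prod_encode x) = prod_encode ` {y \<in> LamT \<tau>. y \<noteq> (root S, 0) \<and> Pm \<tau> y = x}"
      unfolding children_def eA rA pA by auto
    then show "children ?A (prod_encode x) = prod_encode ` Ch \<tau> x" using C4[OF t x] by simp
  qed
  have lvA: "leaves ?A = prod_encode ` {x \<in> LamT \<tau>. Ch \<tau> x = {}}"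
    unfolding leaves_def using chA eA by auto
  have lvs: "{x \<in> LamT \<tau>. Ch \<tau> x = {}} = leaves S \<times> {n}"
  proof (intro set_eqI iffI)
    fix x assume x: "x \<in> {x \<in> LamT \<tau>. Ch \<tau> x = {}}"
    obtain s u where xs: "x = (s, u)" by (cases x)
    have "s \<in> leaves S \<and> u = n" using Ch_empty[OF t, of s u] x xs by simp
    then show "x \<in> leaves S \<times> {n}" using xs by simp
  next
    fix x assume x: "x \<in> leaves S \<times> {n}"
    then obtain s where xs: "x = (s, n)" "s \<in> leaves S" by auto
    have se: "s \<in> edges S" using xs by (simp add: leaves_def)
    have "(s, n) \<in> LamT \<tau>" using M_lohi[OF t se] xs se by (simp add: LamT_def hi_def NL_def)
    then show "x \<in> {x \<in> LamT \<tau>. Ch \<tau> x = {}}" using Ch_empty[OF t] xs by auto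
  qed
  have sh: "is_shuffle S (L n) ?A prod_decode"
    unfolding is_shuffle_def
  proof (intro conjI ballI)
    show "is_tree ?A" by (rule tree)
  next
    fix e assume "e \<in> edges ?A"
    then show "prod_decode e \<in> edges S \<times> edges (L n)" using eA Lsub by (auto simp: edges_L)
  next
    show "prod_decode (root ?A) = (root S, root (L n))" using rA by (simp add: root_L)
  next
    show "bij_betw prod_decode (leaves ?A) (leaves S \<times> leaves (L n))"
      using bij_dec lvA lvs by (simp add: leaves_L)
  next
    fix e assume e: "e \<in> edges ?A - leaves ?A"
    then obtain s u where x: "e = prod_encode (s, u)" "(s, u) \<in> LamT \<tau>" using eA by auto
    have ne: "Ch \<tau> (s, u) \<noteq> {}" using e x lvA by auto
    have ch: "children ?A e = prod_encode ` Ch \<tau> (s, u)" using chA x by simp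
    have hn: "hi \<tau> s \<le> n" using M_lohi[OF t] x by (simp add: LamT_def)
    show "bij_betw prod_decode (children ?A e) (children S (fst (prod_decode e)) \<times> {snd (prod_decode e)})
        \<or> bij_betw prod_decode (children ?A e) ({fst (prod_decode e)} \<times> children (L n) (snd (prod_decode e)))"
    proof (cases "u < hi \<tau> s")
      case True
      then have "Ch \<tau> (s, u) = {s} \<times> children (L n) u" using hn by (simp add: Ch_def children_L)
      then show ?thesis using ch x bij_dec by simp
    next
      case False
      then have "Ch \<tau> (s, u) = children S s \<times> {u}" using ne by (simp add: Ch_def split: if_splits)
      then show ?thesis using ch x bij_dec by simp
    qed
  qed
  moreover have "prod_decode ` edges ?A = LamT \<tau>" using eA by (simp add: image_image)
  ultimately show ?thesis by blast
qed

lemma LamT_inj: "inj_on LamT Mset"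
proof (rule inj_onI)
  fix t1 t2 assume t: "t1 \<in> Mset" "t2 \<in> Mset" and eq: "LamT t1 = LamT t2"
  show "t1 = t2"
  proof (rule ext, rule ccontr)
    fix s assume ne: "t1 s \<noteq> t2 s"
    have sN: "s \<in> NL"
    proof (rule ccontr)
      assume "s \<notin> NL" then show False using ne t by (simp add: Mset_def)
    qed
    have se: "s \<in> edges S" using sN by (simp add: NL_def)
    have "\<And>a b. a \<in> Mset \<Longrightarrow> b \<in> Mset \<Longrightarrow> LamT a = LamT b \<Longrightarrow> a s < b s \<Longrightarrow> False"
    proof -
      fix a b assume ab: "a \<in> Mset" "b \<in> Mset" "LamT a = LamT b" "a s < b s"
      have "lo b s \<le> hi b s" using M_lohi[OF ab(2) se] by blast
      then have "(s, b s) \<in> LamT b" using se sN by (simp add: LamT_def hi_def)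
      then have "(s, b s) \<in> LamT a" using ab(3) by simp
      then show False using ab(4) sN by (simp add: LamT_def hi_def)
    qed
    then show False using t eq ne by (metis linorder_neqE_nat)
  qed
qed

end



lemma card_quot:
  assumes R: "\<And>X Y. X \<in> Sh \<Longrightarrow> Y \<in> Sh \<Longrightarrow> Rel X Y \<longleftrightarrow> f X = f Y"
  shows "card (Sh // {(X, Y). X \<in> Sh \<and> Y \<in> Sh \<and> Rel X Y}) = card (f ` Sh)"
proof -
  let ?r = "{(X, Y). X \<in> Sh \<and> Y \<in> Sh \<and> Rel X Y}"
  let ?g = "\<lambda>v. {X \<in> Sh. f X = v}"
  have "Sh // ?r = ?g ` (f ` Sh)"
  proof (intro set_eqI iffI)
    fix C assume "C \<in> Sh // ?r"
    then obtain X where X: "X \<in> Sh" "C = ?r `` {X}" by (auto simp: quotient_def)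
    then have "C = ?g (f X)" using R by auto
    then show "C \<in> ?g ` (f ` Sh)" using X by blast
  next
    fix C assume "C \<in> ?g ` (f ` Sh)"
    then obtain X where X: "X \<in> Sh" "C = ?g (f X)" by blast
    then have "C = ?r `` {X}" using R by auto
    then show "C \<in> Sh // ?r" using X by (auto simp: quotient_def)
  qed
  moreover have "inj_on ?g (f ` Sh)"
  proof (rule inj_onI)
    fix u v assume "u \<in> f ` Sh" "v \<in> f ` Sh" "?g u = ?g v"
    then obtain X where "X \<in> Sh" "f X = u" "X \<in> ?g v" by blast
    then show "u = v" by simp
  qed
  ultimately show ?thesis by (simp add: card_image)
qed

context shS begin

lemma iso_iff:
  assumes X: "is_shuffle S (L n) A lab" and Y: "is_shuffle S (L n) B lab'"
  shows "lab_iso (A, lab) (B, lab') \<longleftrightarrow> lab ` edges A = lab' ` edges B"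
proof -
  interpret X: shA S d n A lab by (intro shA.intro shS_axioms) (simp add: shA_axioms_def X)
  interpret Y: shA S d n B lab' by (intro shA.intro shS_axioms) (simp add: shA_axioms_def Y)
  show ?thesis
  proof
    assume "lab_iso (A, lab) (B, lab')"
    then obtain f where f: "bij_betw f (edges A) (edges B)" "\<forall>e\<in>edges A. lab' (f e) = lab e"
      by (auto simp: lab_iso_def)
    have "lab' ` edges B = lab' ` f ` edges A" using f(1) by (simp add: bij_betw_def)
    also have "\<dots> = lab ` edges A" using f(2) by (force simp: image_image)
    finally show "lab ` edges A = lab' ` edges B" by simp
  next
    assume eq: "lab ` edges A = lab' ` edges B"
    have LL: "X.Lam = Y.Lam" using eq by (simp add: X.Lam_def Y.Lam_def)
    define g where "g = the_inv_into (edges B) lab'"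
    define f where "f = g \<circ> lab"
    have b1: "bij_betw lab (edges A) (lab ` edges A)" using X.lab_inj by (simp add: inj_on_imp_bij_betw)
    have b2': "bij_betw lab' (edges B) (lab' ` edges B)" using Y.lab_inj by (simp add: inj_on_imp_bij_betw)
    have b2: "bij_betw g (lab' ` edges B) (edges B)" unfolding g_def by (rule bij_betw_the_inv_into[OF b2'])
    have bf: "bij_betw f (edges A) (edges B)" unfolding f_def using bij_betw_trans[OF b1] b2 eq by simp
    have lf: "\<And>e. e \<in> edges A \<Longrightarrow> lab' (f e) = lab e"
    proof -
      fix e assume "e \<in> edges A"
      then have "lab e \<in> lab' ` edges B" using eq by blast
      then show "lab' (f e) = lab e" unfolding f_def g_def by (simp add: f_the_inv_into_f[OF Y.lab_inj])
    qed
    have gl: "\<And>e. e \<in> edges B \<Longrightarrow> g (lab' e) = e"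
      unfolding g_def by (rule the_inv_into_f_f[OF Y.lab_inj])
    have fr: "f (root A) = root B" unfolding f_def using X.labroot Y.labroot gl[OF Y.rootA] by simp
    have fp: "\<forall>e\<in>edges A - {root A}. f (par A e) = par B (f e)"
    proof
      fix e assume e: "e \<in> edges A - {root A}"
      obtain s t where st: "lab e = (s, t)" by (cases "lab e")
      have fe: "f e \<in> edges B" using bf e by (auto simp: bij_betw_def)
      have lfe: "lab' (f e) = (s, t)" using lf e st by simp
      have nr: "f e \<noteq> root B"
      proof
        assume "f e = root B"
        then have "lab e = lab (root A)" using lf[of e] e Y.labroot X.labroot by simp
        then show False using X.lab_inj e X.rootA by (auto simp: inj_on_def)
      qed
      have "lab' (par B (f e)) = lab (par A e)"
        using Y.pred_det[OF fe nr lfe] X.pred_det[of e s t] e st LL by simp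
      moreover have "par B (f e) \<in> edges B" using Y.parA[OF fe nr] .
      ultimately have "g (lab (par A e)) = par B (f e)" using gl by metis
      then show "f (par A e) = par B (f e)" by (simp add: f_def)
    qed
    show "lab_iso (A, lab) (B, lab')" unfolding lab_iso_def using bf fr fp lf by auto
  qed
qed

lemma sh_eq: "sh S (L n) = card Mset"
proof -
  let ?F = "\<lambda>X :: nat rtree \<times> (nat \<Rightarrow> nat \<times> nat). snd X ` edges (fst X)"
  have "sh S (L n) = card (?F ` shuffles S (L n))"
    unfolding sh_def
  proof (rule card_quot)
    fix X Y assume XY: "X \<in> shuffles S (L n)" "Y \<in> shuffles S (L n)"
    obtain A lab where x: "X = (A, lab)" by (cases X)
    obtain B lab' where y: "Y = (B, lab')" by (cases Y)
    have "is_shuffle S (L n) A lab" "is_shuffle S (L n) B lab'" using XY x y by (simp_all add: shuffles_def)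
    then show "lab_iso X Y \<longleftrightarrow> ?F X = ?F Y" using iso_iff x y by simp
  qed
  also have "?F ` shuffles S (L n) = LamT ` Mset"
  proof (intro set_eqI iffI)
    fix Z assume "Z \<in> ?F ` shuffles S (L n)"
    then obtain A lab where X: "is_shuffle S (L n) A lab" "Z = lab ` edges A"
      by (auto simp: shuffles_def)
    interpret X: shA S d n A lab by (intro shA.intro shS_axioms) (simp add: shA_axioms_def X)
    have "Z = LamT X.tX" using X.Lam_eq X(2) by (simp add: X.Lam_def)
    then show "Z \<in> LamT ` Mset" using X.tX_M by blast
  next
    fix Z assume "Z \<in> LamT ` Mset"
    then obtain \<tau> where t: "\<tau> \<in> Mset" "Z = LamT \<tau>" by blast
    have "(Atr \<tau>, prod_decode) \<in> shuffles S (L n)" using constr[OF t(1)] by (simp add: shuffles_def)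
    moreover have "?F (Atr \<tau>, prod_decode) = Z" using constr[OF t(1)] t(2) by simp
    ultimately show "Z \<in> ?F ` shuffles S (L n)" by force
  qed
  also have "card (LamT ` Mset) = card Mset" by (rule card_image[OF LamT_inj])
  finally show ?thesis .
qed

end



lemma S_e: "edges S_tree = {0..7}" and S_r: "root S_tree = 0"
  and S_p: "par S_tree = (\<lambda>e. if e = 1 then 0 else if e \<in> {2,3,4} then 1
        else if e = 5 then 2 else if e = 6 then 3 else if e = 7 then 4 else 0)"
  by (simp_all add: S_tree_def edges_def root_def par_def)

lemma R_e: "edges R_tree = {0..6}" and R_r: "root R_tree = 0"
  and R_p: "par R_tree = (\<lambda>e. if e \<in> {1,2} then 0 else if e = 3 then 1
        else if e = 4 then 2 else if e = 5 then 3 else if e = 6 then 4 else 0)"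
  by (simp_all add: R_tree_def edges_def root_def par_def)

lemma upto7: "(s::nat) \<in> {0..7} \<longleftrightarrow> s = 0 \<or> s = 1 \<or> s = 2 \<or> s = 3 \<or> s = 4 \<or> s = 5 \<or> s = 6 \<or> s = 7"
  by auto
lemma upto6: "(s::nat) \<in> {0..6} \<longleftrightarrow> s = 0 \<or> s = 1 \<or> s = 2 \<or> s = 3 \<or> s = 4 \<or> s = 5 \<or> s = 6"
  by auto

lemma S_ch: "children S_tree s = (if s = 0 then {1} else if s = 1 then {2,3,4} else if s = 2 then {5}
   else if s = 3 then {6} else if s = 4 then {7} else {})"
  unfolding children_def S_e S_r S_p upto7 by auto

lemma R_ch: "children R_tree s = (if s = 0 then {1,2} else if s = 1 then {3} else if s = 2 then {4}
   else if s = 3 then {5} else if s = 4 then {6} else {})"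
  unfolding children_def R_e R_r R_p upto6 by auto

lemma S_l: "leaves S_tree = {5,6,7}"
  unfolding leaves_def S_ch S_e by auto
lemma R_l: "leaves R_tree = {5,6}"
  unfolding leaves_def R_ch R_e by auto

definition dS :: "nat \<Rightarrow> nat" where "dS s = (if s = 0 then 0 else if s = 1 then 1 else if s \<le> 4 then 2 else 3)"
definition dR :: "nat \<Rightarrow> nat" where "dR s = (if s = 0 then 0 else if s \<le> 2 then 1 else if s \<le> 4 then 2 else 3)"

lemma shS_S: "shS S_tree dS"
proof
  show "finite (edges S_tree)" by (simp add: S_e)
  show "root S_tree \<in> edges S_tree" by (simp add: S_e S_r)
  show "\<And>s. s \<in> edges S_tree \<Longrightarrow> par S_tree s \<in> edges S_tree" by (simp add: S_e S_p)
  show "par S_tree (root S_tree) = root S_tree" by (simp add: S_p S_r)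
  show "dS (root S_tree) = 0" by (simp add: S_r dS_def)
  show "\<And>s. s \<in> edges S_tree \<Longrightarrow> s \<noteq> root S_tree \<Longrightarrow> dS (par S_tree s) + 1 = dS s"
    unfolding S_e S_r S_p upto7 by (auto simp: dS_def)
  show "\<And>s. s \<in> edges S_tree \<Longrightarrow> s \<notin> leaves S_tree \<Longrightarrow> \<exists>l\<in>leaves S_tree. ancS S_tree s l"
  proof -
    fix s assume "s \<in> edges S_tree" "s \<notin> leaves S_tree"
    then have "s = 0 \<or> s = 1 \<or> s = 2 \<or> s = 3 \<or> s = 4" unfolding S_e S_l upto7 by auto
    moreover
    have "ancS S_tree 0 5" unfolding ancS_def by (rule exI[of _ 3]) (simp add: S_p numeral_3_eq_3 numeral_2_eq_2)
    moreover have "ancS S_tree 1 5" unfolding ancS_def by (rule exI[of _ 2]) (simp add: S_p numeral_3_eq_3 numeral_2_eq_2)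
    moreover have "ancS S_tree 2 5" unfolding ancS_def by (rule exI[of _ 1]) (simp add: S_p numeral_3_eq_3 numeral_2_eq_2)
    moreover have "ancS S_tree 3 6" unfolding ancS_def by (rule exI[of _ 1]) (simp add: S_p numeral_3_eq_3 numeral_2_eq_2)
    moreover have "ancS S_tree 4 7" unfolding ancS_def by (rule exI[of _ 1]) (simp add: S_p numeral_3_eq_3 numeral_2_eq_2)
    ultimately show "\<exists>l\<in>leaves S_tree. ancS S_tree s l" unfolding S_l by blast
  qed
qed

lemma shS_R: "shS R_tree dR"
proof
  show "finite (edges R_tree)" by (simp add: R_e)
  show "root R_tree \<in> edges R_tree" by (simp add: R_e R_r)
  show "\<And>s. s \<in> edges R_tree \<Longrightarrow> par R_tree s \<in> edges R_tree" by (simp add: R_e R_p)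
  show "par R_tree (root R_tree) = root R_tree" by (simp add: R_p R_r)
  show "dR (root R_tree) = 0" by (simp add: R_r dR_def)
  show "\<And>s. s \<in> edges R_tree \<Longrightarrow> s \<noteq> root R_tree \<Longrightarrow> dR (par R_tree s) + 1 = dR s"
    unfolding R_e R_r R_p upto6 by (auto simp: dR_def)
  show "\<And>s. s \<in> edges R_tree \<Longrightarrow> s \<notin> leaves R_tree \<Longrightarrow> \<exists>l\<in>leaves R_tree. ancS R_tree s l"
  proof -
    fix s assume "s \<in> edges R_tree" "s \<notin> leaves R_tree"
    then have "s = 0 \<or> s = 1 \<or> s = 2 \<or> s = 3 \<or> s = 4" unfolding R_e R_l upto6 by auto
    moreover
    have "ancS R_tree 0 5" unfolding ancS_def by (rule exI[of _ 3]) (simp add: R_p numeral_3_eq_3 numeral_2_eq_2)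
    moreover have "ancS R_tree 1 5" unfolding ancS_def by (rule exI[of _ 2]) (simp add: R_p numeral_3_eq_3 numeral_2_eq_2)
    moreover have "ancS R_tree 2 6" unfolding ancS_def by (rule exI[of _ 2]) (simp add: R_p numeral_3_eq_3 numeral_2_eq_2)
    moreover have "ancS R_tree 3 5" unfolding ancS_def by (rule exI[of _ 1]) (simp add: R_p numeral_3_eq_3 numeral_2_eq_2)
    moreover have "ancS R_tree 4 6" unfolding ancS_def by (rule exI[of _ 1]) (simp add: R_p numeral_3_eq_3 numeral_2_eq_2)
    ultimately show "\<exists>l\<in>leaves R_tree. ancS R_tree s l" unfolding R_l by blast
  qed
qed


lemma inner3: "a \<le> n \<Longrightarrow> (\<Sum>b=a..n. (Suc n - b)^3) = ((n - a + 2) choose 2)^2"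
proof -
  assume "a \<le> n"
  then obtain m where m: "n = a + m" using le_Suc_ex by blast
  have "(\<Sum>b=a..a+m. (Suc (a+m) - b)^3) = (\<Sum>b=a..a+m. (\<lambda>j. (Suc j)^3) (a + m - b))"
    by (rule sum.cong) (auto simp: Suc_diff_le)
  also have "\<dots> = (\<Sum>j=0..m. (Suc j)^3)" by (rule sum_rev_nat)
  also have "\<dots> = ((m+2) choose 2)^2" by (rule sum_cubes)
  finally show ?thesis using m by simp
qed

lemma inner1: "a \<le> n \<Longrightarrow> (\<Sum>b=a..n. (Suc n - b)) = ((n - a + 2) choose 2)"
proof -
  assume "a \<le> n"
  then obtain m where m: "n = a + m" using le_Suc_ex by blast
  have "(\<Sum>b=a..a+m. (Suc (a+m) - b)) = (\<Sum>b=a..a+m. (\<lambda>j. Suc j) (a + m - b))"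
    by (rule sum.cong) (auto simp: Suc_diff_le)
  also have "\<dots> = (\<Sum>j=0..m. Suc j)" by (rule sum_rev_nat)
  also have "\<dots> = ((m+2) choose 2)" by (rule sum_lin)
  finally show ?thesis using m by simp
qed

lemma outer: "(\<Sum>a=0..n. ((n - a + 2) choose 2)^2) = (\<Sum>k=0..n. ((k+2) choose 2)^2)"
  using sum_rev_nat[of "\<lambda>j. ((j + 2) choose 2)^2" 0 n] by simp

lemma card_MS: "card (shS.Mset S_tree n) = (\<Sum>k=0..n. ((k+2) choose 2)^2)"
proof -
  interpret S1: shS S_tree dS n by (rule shS_S)
  have NL: "S1.NL = {0,1,2,3,4}" unfolding S1.NL_def S_e S_l by auto
  define g :: "nat \<times> nat \<times> nat \<times> nat \<times> nat \<Rightarrow> nat \<Rightarrow> nat" where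
    "g x = (\<lambda>s. if s = 0 then fst x else if s = 1 then fst (snd x) else if s = 2 then fst (snd (snd x))
       else if s = 3 then fst (snd (snd (snd x))) else if s = 4 then snd (snd (snd (snd x))) else 0)" for x
  define TS where "TS = (SIGMA a:{0..n}. SIGMA b:{a..n}. {b..n} \<times> {b..n} \<times> {b..n})"
  have inj: "inj_on g TS"
  proof (rule inj_onI)
    fix x y assume "g x = g y"
    then have "g x 0 = g y 0" "g x 1 = g y 1" "g x 2 = g y 2" "g x 3 = g y 3" "g x 4 = g y 4" by simp_all
    then show "x = y" by (simp add: g_def prod_eq_iff)
  qed
  have Mdef: "\<And>\<tau>. \<tau> \<in> S1.Mset \<longleftrightarrow> (\<forall>s. (s \<in> S1.NL \<longrightarrow> \<tau> s \<le> n \<and> (s \<noteq> root S_tree \<longrightarrow> \<tau> (par S_tree s) \<le> \<tau> s))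
       \<and> (s \<notin> S1.NL \<longrightarrow> \<tau> s = 0))" by (simp add: S1.Mset_def)
  have eq: "S1.Mset = g ` TS"
  proof (intro set_eqI iffI)
    fix \<tau> assume t: "\<tau> \<in> S1.Mset"
    then have H: "\<And>s. (s \<in> S1.NL \<longrightarrow> \<tau> s \<le> n \<and> (s \<noteq> root S_tree \<longrightarrow> \<tau> (par S_tree s) \<le> \<tau> s))
       \<and> (s \<notin> S1.NL \<longrightarrow> \<tau> s = 0)" using Mdef by blast
    have h0: "\<tau> 0 \<le> n" using H[of 0] NL by simp
    have h1: "\<tau> 0 \<le> \<tau> 1" "\<tau> 1 \<le> n" using H[of 1] NL by (simp_all add: S_r S_p)
    have h2: "\<tau> 1 \<le> \<tau> 2" "\<tau> 2 \<le> n" using H[of 2] NL by (simp_all add: S_r S_p)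
    have h3: "\<tau> 1 \<le> \<tau> 3" "\<tau> 3 \<le> n" using H[of 3] NL by (simp_all add: S_r S_p)
    have h4: "\<tau> 1 \<le> \<tau> 4" "\<tau> 4 \<le> n" using H[of 4] NL by (simp_all add: S_r S_p)
    have hz: "\<And>s. s > 4 \<Longrightarrow> \<tau> s = 0" using H NL by auto
    have "\<tau> = g (\<tau> 0, \<tau> 1, \<tau> 2, \<tau> 3, \<tau> 4)"
    proof
      fix s show "\<tau> s = g (\<tau> 0, \<tau> 1, \<tau> 2, \<tau> 3, \<tau> 4) s"
      proof -
        have "s = 0 \<or> s = 1 \<or> s = 2 \<or> s = 3 \<or> s = 4 \<or> s > 4" by arith
        then show ?thesis using hz[of s] by (auto simp: g_def)
      qed
    qed
    moreover have "(\<tau> 0, \<tau> 1, \<tau> 2, \<tau> 3, \<tau> 4) \<in> TS" using h0 h1 h2 h3 h4 by (simp add: TS_def)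
    ultimately show "\<tau> \<in> g ` TS" by blast
  next
    fix \<tau> assume "\<tau> \<in> g ` TS"
    then obtain a b c e f where x: "\<tau> = g (a, b, c, e, f)" "(a, b, c, e, f) \<in> TS" by auto
    have c: "a \<le> b" "b \<le> c" "b \<le> e" "b \<le> f" "c \<le> n" "e \<le> n" "f \<le> n" "b \<le> n" "a \<le> n"
      using x(2) by (auto simp: TS_def)
    show "\<tau> \<in> S1.Mset" unfolding Mdef
    proof (intro allI conjI impI)
      fix s assume "s \<in> S1.NL"
      then have "s = 0 \<or> s = 1 \<or> s = 2 \<or> s = 3 \<or> s = 4" using NL by simp
      then show "\<tau> s \<le> n" using c x(1) by (auto simp: g_def)
    next
      fix s assume "s \<in> S1.NL" "s \<noteq> root S_tree"
      then have "s = 1 \<or> s = 2 \<or> s = 3 \<or> s = 4" using NL by (simp add: S_r)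
      then show "\<tau> (par S_tree s) \<le> \<tau> s" using c x(1) by (auto simp: g_def S_p)
    next
      fix s assume "s \<notin> S1.NL"
      then show "\<tau> s = 0" using NL x(1) by (simp add: g_def)
    qed
  qed
  have "card S1.Mset = card TS" using eq inj by (simp add: card_image)
  also have "card TS = (\<Sum>a=0..n. \<Sum>b=a..n. (Suc n - b)^3)"
    unfolding TS_def by (simp add: card_cartesian_product power3_eq_cube mult.assoc)
  also have "\<dots> = (\<Sum>a=0..n. ((n - a + 2) choose 2)^2)" by (rule sum.cong) (simp_all add: inner3)
  also have "\<dots> = (\<Sum>k=0..n. ((k+2) choose 2)^2)" by (rule outer)
  finally show ?thesis .
qed

lemma card_MR: "card (shS.Mset R_tree n) = (\<Sum>k=0..n. ((k+2) choose 2)^2)"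
proof -
  interpret R1: shS R_tree dR n by (rule shS_R)
  have NL: "R1.NL = {0,1,2,3,4}" unfolding R1.NL_def R_e R_l by auto
  define g :: "nat \<times> (nat \<times> nat) \<times> (nat \<times> nat) \<Rightarrow> nat \<Rightarrow> nat" where
    "g x = (\<lambda>s. if s = 0 then fst x else if s = 1 then fst (fst (snd x)) else if s = 2 then fst (snd (snd x))
       else if s = 3 then snd (fst (snd x)) else if s = 4 then snd (snd (snd x)) else 0)" for x
  define TR where "TR = (SIGMA a:{0..n}. (SIGMA b:{a..n}. {b..n}) \<times> (SIGMA c:{a..n}. {c..n}))"
  have inj: "inj_on g TR"
  proof (rule inj_onI)
    fix x y assume "g x = g y"
    then have "g x 0 = g y 0" "g x 1 = g y 1" "g x 2 = g y 2" "g x 3 = g y 3" "g x 4 = g y 4" by simp_all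
    then show "x = y" by (simp add: g_def prod_eq_iff)
  qed
  have Mdef: "\<And>\<tau>. \<tau> \<in> R1.Mset \<longleftrightarrow> (\<forall>s. (s \<in> R1.NL \<longrightarrow> \<tau> s \<le> n \<and> (s \<noteq> root R_tree \<longrightarrow> \<tau> (par R_tree s) \<le> \<tau> s))
       \<and> (s \<notin> R1.NL \<longrightarrow> \<tau> s = 0))" by (simp add: R1.Mset_def)
  have eq: "R1.Mset = g ` TR"
  proof (intro set_eqI iffI)
    fix \<tau> assume t: "\<tau> \<in> R1.Mset"
    then have H: "\<And>s. (s \<in> R1.NL \<longrightarrow> \<tau> s \<le> n \<and> (s \<noteq> root R_tree \<longrightarrow> \<tau> (par R_tree s) \<le> \<tau> s))
       \<and> (s \<notin> R1.NL \<longrightarrow> \<tau> s = 0)" using Mdef by blast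
    have h0: "\<tau> 0 \<le> n" using H[of 0] NL by simp
    have h1: "\<tau> 0 \<le> \<tau> 1" "\<tau> 1 \<le> n" using H[of 1] NL by (simp_all add: R_r R_p)
    have h2: "\<tau> 0 \<le> \<tau> 2" "\<tau> 2 \<le> n" using H[of 2] NL by (simp_all add: R_r R_p)
    have h3: "\<tau> 1 \<le> \<tau> 3" "\<tau> 3 \<le> n" using H[of 3] NL by (simp_all add: R_r R_p)
    have h4: "\<tau> 2 \<le> \<tau> 4" "\<tau> 4 \<le> n" using H[of 4] NL by (simp_all add: R_r R_p)
    have hz: "\<And>s. s > 4 \<Longrightarrow> \<tau> s = 0" using H NL by auto
    have "\<tau> = g (\<tau> 0, (\<tau> 1, \<tau> 3), (\<tau> 2, \<tau> 4))"
    proof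
      fix s show "\<tau> s = g (\<tau> 0, (\<tau> 1, \<tau> 3), (\<tau> 2, \<tau> 4)) s"
      proof -
        have "s = 0 \<or> s = 1 \<or> s = 2 \<or> s = 3 \<or> s = 4 \<or> s > 4" by arith
        then show ?thesis using hz[of s] by (auto simp: g_def)
      qed
    qed
    moreover have "(\<tau> 0, (\<tau> 1, \<tau> 3), (\<tau> 2, \<tau> 4)) \<in> TR" using h0 h1 h2 h3 h4 by (simp add: TR_def)
    ultimately show "\<tau> \<in> g ` TR" by blast
  next
    fix \<tau> assume "\<tau> \<in> g ` TR"
    then obtain a b c e f where x: "\<tau> = g (a, (b, e), (c, f))" "(a, (b, e), (c, f)) \<in> TR" by auto
    have c: "a \<le> b" "a \<le> c" "b \<le> e" "c \<le> f" "e \<le> n" "f \<le> n" "b \<le> n" "c \<le> n" "a \<le> n"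
      using x(2) by (auto simp: TR_def)
    show "\<tau> \<in> R1.Mset" unfolding Mdef
    proof (intro allI conjI impI)
      fix s assume "s \<in> R1.NL"
      then have "s = 0 \<or> s = 1 \<or> s = 2 \<or> s = 3 \<or> s = 4" using NL by simp
      then show "\<tau> s \<le> n" using c x(1) by (auto simp: g_def)
    next
      fix s assume "s \<in> R1.NL" "s \<noteq> root R_tree"
      then have "s = 1 \<or> s = 2 \<or> s = 3 \<or> s = 4" using NL by (simp add: R_r)
      then show "\<tau> (par R_tree s) \<le> \<tau> s" using c x(1) by (auto simp: g_def R_p)
    next
      fix s assume "s \<notin> R1.NL"
      then show "\<tau> s = 0" using NL x(1) by (simp add: g_def)
    qed
  qed
  have "card R1.Mset = card TR" using eq inj by (simp add: card_image)
  also have "card TR = (\<Sum>a=0..n. (\<Sum>b=a..n. (Suc n - b)) * (\<Sum>b=a..n. (Suc n - b)))"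
    unfolding TR_def by (simp add: card_cartesian_product)
  also have "\<dots> = (\<Sum>a=0..n. ((n - a + 2) choose 2)^2)" by (rule sum.cong) (simp_all add: inner1 power2_eq_square)
  also have "\<dots> = (\<Sum>k=0..n. ((k+2) choose 2)^2)" by (rule outer)
  finally show ?thesis .
qed

theorem mainTheorem7:
  shows "(\<forall>n::nat. sh S_tree (L n) = (\<Sum>k=0..n. ((k + 2) choose 2)^2)
                 \<and> sh R_tree (L n) = (\<Sum>k=0..n. ((k + 2) choose 2)^2))
         \<and> \<not> tree_iso S_tree R_tree"
proof (intro conjI allI)
  fix n :: nat
  interpret S1: shS S_tree dS n by (rule shS_S)
  interpret R1: shS R_tree dR n by (rule shS_R)
  show "sh S_tree (L n) = (\<Sum>k=0..n. ((k + 2) choose 2)^2)" using S1.sh_eq card_MS by simp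
  show "sh R_tree (L n) = (\<Sum>k=0..n. ((k + 2) choose 2)^2)" using R1.sh_eq card_MR by simp
next
  show "\<not> tree_iso S_tree R_tree"
  proof
    assume "tree_iso S_tree R_tree"
    then obtain f where "bij_betw f (edges S_tree) (edges R_tree)" by (auto simp: tree_iso_def)
    then have "card (edges S_tree) = card (edges R_tree)" by (rule bij_betw_same_card)
    then show False by (simp add: S_e R_e)
  qed
qed


end
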